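(* Let $m\ge1$ and let $G=mK_2$ be the simple graph consisting of $m$ pairwise disjoint edges, whose vertices are among the variables of $S=\mathbb{K}[x_1,\dots,x_n]$, $\mathbb{K}$ a field. Then $\operatorname{sreg}(S/I(G))=\lceil m/2\rceil$.
   Context: For a simple graph $G$ with vertices identified with variables, $I(G)=(xy : \{x,y\}\in E(G))\subset S$ is its edge ideal. Stanley regularity: for a squarefree monomial ideal $I\subset S$, a squarefree Stanley decomposition of $S/I$ is a decomposition $S/I=\bigoplus_{i=1}^r u_i\mathbb{K}[Z_i]$ as $\mathbb{K}$-vector spaces, where $Z_i\subseteq\{x_1,\dots,x_n\}$, $u_i$ are (images of) squarefree monomials with $\operatorname{supp}(u_i)\subseteq Z_i$, and each $u_i\mathbb{K}[Z_i]$ is free over $\mathbb{K}[Z_i]$. Its Stanley regularity is $\max_i\deg(u_i)$, and $\operatorname{sreg}(S/I)$ is the minimum over all such decompositions. *)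

theory Defs
  imports Main
begin

text \<open>Monomials of S = K[x_0,...,x_{n-1}] are exponent vectors a :: nat \<Rightarrow> nat
  vanishing outside {..<n}. Since the edge ideal is a monomial ideal, S/I(G) has the
  K-basis of standard monomials (monomials not in I(G)), and a squarefree Stanley
  decomposition is described by its monomial bases.\<close>

definition mono_set :: "nat \<Rightarrow> (nat \<Rightarrow> nat) set" where
  "mono_set n = {a. \<forall>i\<ge>n. a i = 0}"

definition msupp :: "(nat \<Rightarrow> nat) \<Rightarrow> nat set" where
  "msupp a = {i. a i \<noteq> 0}"

definition mdeg :: "nat \<Rightarrow> (nat \<Rightarrow> nat) \<Rightarrow> nat" where
  "mdeg n a = (\<Sum>i<n. a i)"

definition squarefree_mono :: "(nat \<Rightarrow> nat) \<Rightarrow> bool" where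
  "squarefree_mono a \<longleftrightarrow> (\<forall>i. a i \<le> 1)"

text \<open>Edges are 2-element sets of variables; a monomial lies in I(G) iff it is
  divisible by x_i x_j for some edge {i,j}.\<close>
definition in_edge_ideal :: "nat set set \<Rightarrow> (nat \<Rightarrow> nat) \<Rightarrow> bool" where
  "in_edge_ideal E a \<longleftrightarrow> (\<exists>x y. x \<noteq> y \<and> {x, y} \<in> E \<and> a x > 0 \<and> a y > 0)"

definition standard_monos :: "nat \<Rightarrow> nat set set \<Rightarrow> (nat \<Rightarrow> nat) set" where
  "standard_monos n E = {a \<in> mono_set n. \<not> in_edge_ideal E a}"

text \<open>Monomial basis of the Stanley space u K[Z].\<close>
definition stanley_space :: "(nat \<Rightarrow> nat) \<Rightarrow> nat set \<Rightarrow> (nat \<Rightarrow> nat) set" where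
  "stanley_space u Z = {a. \<exists>v. msupp v \<subseteq> Z \<and> a = (\<lambda>i. u i + v i)}"

text \<open>Squarefree Stanley decomposition S/I(G) = (+) u_i K[Z_i]: Z_i variables,
  u_i squarefree with supp u_i \<subseteq> Z_i, u_i K[Z_i] free (no monomial of it lies in I),
  the sum is direct and exhausts S/I(G).\<close>
definition sq_stanley_decomp ::
  "nat \<Rightarrow> nat set set \<Rightarrow> ((nat \<Rightarrow> nat) \<times> nat set) list \<Rightarrow> bool" where
  "sq_stanley_decomp n E D \<longleftrightarrow>
     (\<forall>k<length D. fst (D!k) \<in> mono_set n \<and> snd (D!k) \<subseteq> {..<n}
        \<and> squarefree_mono (fst (D!k)) \<and> msupp (fst (D!k)) \<subseteq> snd (D!k)
        \<and> stanley_space (fst (D!k)) (snd (D!k)) \<inter> {a. in_edge_ideal E a} = {}) \<and>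
     (\<forall>k<length D. \<forall>l<length D. k \<noteq> l \<longrightarrow>
        stanley_space (fst (D!k)) (snd (D!k)) \<inter> stanley_space (fst (D!l)) (snd (D!l)) = {}) \<and>
     (\<Union>k<length D. stanley_space (fst (D!k)) (snd (D!k))) = standard_monos n E"

definition stanley_reg_of :: "nat \<Rightarrow> ((nat \<Rightarrow> nat) \<times> nat set) list \<Rightarrow> nat" where
  "stanley_reg_of n D = Max (insert 0 (set (map (\<lambda>p. mdeg n (fst p)) D)))"

definition sreg :: "nat \<Rightarrow> nat set set \<Rightarrow> nat" where
  "sreg n E = (LEAST r. \<exists>D. sq_stanley_decomp n E D \<and> stanley_reg_of n D = r)"

end

theory Submission
  imports Defs
begin


definition indep :: "nat set set \<Rightarrow> nat set \<Rightarrow> bool" where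
  "indep E G \<longleftrightarrow> (\<forall>e\<in>E. \<not> e \<subseteq> G)"

definition ipart :: "nat set \<Rightarrow> nat set set \<Rightarrow> (nat set \<times> nat set) set \<Rightarrow> bool" where
  "ipart V E P \<longleftrightarrow> finite P \<and> (\<forall>p\<in>P. fst p \<subseteq> snd p \<and> snd p \<subseteq> V \<and> indep E (snd p))
    \<and> (\<forall>p\<in>P. \<forall>q\<in>P. p \<noteq> q \<longrightarrow> (\<forall>G. \<not> (fst p \<subseteq> G \<and> G \<subseteq> snd p \<and> fst q \<subseteq> G \<and> G \<subseteq> snd q)))
    \<and> (\<forall>G. G \<subseteq> V \<longrightarrow> indep E G \<longrightarrow> (\<exists>p\<in>P. fst p \<subseteq> G \<and> G \<subseteq> snd p))"

definition pprod :: "(nat set \<times> nat set) set \<Rightarrow> (nat set \<times> nat set) set \<Rightarrow> (nat set \<times> nat set) set" where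
  "pprod P1 P2 = (\<lambda>(p,q). (fst p \<union> fst q, snd p \<union> snd q)) ` (P1 \<times> P2)"

lemma ipart_fin: "ipart V E P \<Longrightarrow> finite P" unfolding ipart_def by (elim conjE)
lemma ipart_w: "ipart V E P \<Longrightarrow> p \<in> P \<Longrightarrow> fst p \<subseteq> snd p \<and> snd p \<subseteq> V \<and> indep E (snd p)"
  unfolding ipart_def by (elim conjE) (erule bspec)
lemma ipart_dj: "ipart V E P \<Longrightarrow> p \<in> P \<Longrightarrow> q \<in> P \<Longrightarrow> fst p \<subseteq> G \<Longrightarrow> G \<subseteq> snd p \<Longrightarrow> fst q \<subseteq> G \<Longrightarrow> G \<subseteq> snd q \<Longrightarrow> p = q"
  unfolding ipart_def by (elim conjE) blast
lemma ipart_cv: "ipart V E P \<Longrightarrow> G \<subseteq> V \<Longrightarrow> indep E G \<Longrightarrow> \<exists>p\<in>P. fst p \<subseteq> G \<and> G \<subseteq> snd p"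
  unfolding ipart_def by (elim conjE) blast

lemma ipart_intro: "finite P \<Longrightarrow> (\<forall>p\<in>P. fst p \<subseteq> snd p \<and> snd p \<subseteq> V \<and> indep E (snd p))
    \<Longrightarrow> (\<forall>p\<in>P. \<forall>q\<in>P. p \<noteq> q \<longrightarrow> (\<forall>G. \<not> (fst p \<subseteq> G \<and> G \<subseteq> snd p \<and> fst q \<subseteq> G \<and> G \<subseteq> snd q)))
    \<Longrightarrow> (\<forall>G. G \<subseteq> V \<longrightarrow> indep E G \<longrightarrow> (\<exists>p\<in>P. fst p \<subseteq> G \<and> G \<subseteq> snd p)) \<Longrightarrow> ipart V E P"
  unfolding ipart_def by (intro conjI)

lemma ipart_prod:
  assumes h1: "ipart V1 E1 P1" and h2: "ipart V2 E2 P2" and d: "V1 \<inter> V2 = {}"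
    and e1: "\<forall>e\<in>E1. e \<subseteq> V1" and e2: "\<forall>e\<in>E2. e \<subseteq> V2"
  shows "ipart (V1 \<union> V2) (E1 \<union> E2) (pprod P1 P2)"
proof -
  have f: "finite (pprod P1 P2)" using ipart_fin[OF h1] ipart_fin[OF h2] unfolding pprod_def by simp
  have w: "\<forall>p\<in>pprod P1 P2. fst p \<subseteq> snd p \<and> snd p \<subseteq> V1 \<union> V2 \<and> indep (E1 \<union> E2) (snd p)"
  proof
    fix p assume "p \<in> pprod P1 P2"
    then obtain p1 p2 where p1: "p1 \<in> P1" and p2: "p2 \<in> P2" and p: "p = (fst p1 \<union> fst p2, snd p1 \<union> snd p2)"
      unfolding pprod_def by auto
    have a1: "fst p1 \<subseteq> snd p1" "snd p1 \<subseteq> V1" "indep E1 (snd p1)" using ipart_w[OF h1 p1] by auto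
    have a2: "fst p2 \<subseteq> snd p2" "snd p2 \<subseteq> V2" "indep E2 (snd p2)" using ipart_w[OF h2 p2] by auto
    have sp: "snd p = snd p1 \<union> snd p2" using p by simp
    have "indep (E1 \<union> E2) (snd p)"
      unfolding indep_def
    proof
      fix e assume "e \<in> E1 \<union> E2"
      then show "\<not> e \<subseteq> snd p"
      proof (elim UnE; intro notI)
        assume "e \<in> E1"
        moreover assume "e \<subseteq> snd p"
        ultimately have "e \<subseteq> snd p1" using e1 a2 d sp by blast
        then show False using \<open>e \<in> E1\<close> a1 unfolding indep_def by blast
      next
        assume "e \<in> E2"
        moreover assume "e \<subseteq> snd p"
        ultimately have "e \<subseteq> snd p2" using e2 a1 d sp by blast
        then show False using \<open>e \<in> E2\<close> a2 unfolding indep_def by blast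
      qed
    qed
    then show "fst p \<subseteq> snd p \<and> snd p \<subseteq> V1 \<union> V2 \<and> indep (E1 \<union> E2) (snd p)" using a1 a2 p by auto
  qed
  have dj: "\<forall>p\<in>pprod P1 P2. \<forall>q\<in>pprod P1 P2. p \<noteq> q \<longrightarrow> (\<forall>G. \<not> (fst p \<subseteq> G \<and> G \<subseteq> snd p \<and> fst q \<subseteq> G \<and> G \<subseteq> snd q))"
  proof (intro ballI impI allI notI)
    fix p q G assume pP: "p \<in> pprod P1 P2" and qP: "q \<in> pprod P1 P2" and ne: "p \<noteq> q"
      and G: "fst p \<subseteq> G \<and> G \<subseteq> snd p \<and> fst q \<subseteq> G \<and> G \<subseteq> snd q"
    obtain p1 p2 where p1: "p1 \<in> P1" and p2: "p2 \<in> P2" and p: "p = (fst p1 \<union> fst p2, snd p1 \<union> snd p2)"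
      using pP unfolding pprod_def by auto
    obtain q1 q2 where q1: "q1 \<in> P1" and q2: "q2 \<in> P2" and q: "q = (fst q1 \<union> fst q2, snd q1 \<union> snd q2)"
      using qP unfolding pprod_def by auto
    have a1: "fst p1 \<subseteq> snd p1" "snd p1 \<subseteq> V1" "fst q1 \<subseteq> snd q1" "snd q1 \<subseteq> V1"
      using ipart_w[OF h1 p1] ipart_w[OF h1 q1] by auto
    have a2: "fst p2 \<subseteq> snd p2" "snd p2 \<subseteq> V2" "fst q2 \<subseteq> snd q2" "snd q2 \<subseteq> V2"
      using ipart_w[OF h2 p2] ipart_w[OF h2 q2] by auto
    have "fst p1 \<subseteq> G \<inter> V1 \<and> G \<inter> V1 \<subseteq> snd p1 \<and> fst q1 \<subseteq> G \<inter> V1 \<and> G \<inter> V1 \<subseteq> snd q1"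
      using G p q a1 a2 d by auto
    then have "p1 = q1" using ipart_dj[OF h1 p1 q1] by blast
    have "fst p2 \<subseteq> G \<inter> V2 \<and> G \<inter> V2 \<subseteq> snd p2 \<and> fst q2 \<subseteq> G \<inter> V2 \<and> G \<inter> V2 \<subseteq> snd q2"
      using G p q a1 a2 d by auto
    then have "p2 = q2" using ipart_dj[OF h2 p2 q2] by blast
    then show False using ne p q \<open>p1 = q1\<close> by simp
  qed
  have cv: "\<forall>G. G \<subseteq> V1 \<union> V2 \<longrightarrow> indep (E1 \<union> E2) G \<longrightarrow> (\<exists>p\<in>pprod P1 P2. fst p \<subseteq> G \<and> G \<subseteq> snd p)"
  proof (intro allI impI)
    fix G assume GV: "G \<subseteq> V1 \<union> V2" and iG: "indep (E1 \<union> E2) G"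
    have "indep E1 (G \<inter> V1)" using iG unfolding indep_def by auto
    then obtain p1 where p1: "p1 \<in> P1" "fst p1 \<subseteq> G \<inter> V1" "G \<inter> V1 \<subseteq> snd p1"
      using ipart_cv[OF h1, of "G \<inter> V1"] by blast
    have "indep E2 (G \<inter> V2)" using iG unfolding indep_def by auto
    then obtain p2 where p2: "p2 \<in> P2" "fst p2 \<subseteq> G \<inter> V2" "G \<inter> V2 \<subseteq> snd p2"
      using ipart_cv[OF h2, of "G \<inter> V2"] by blast
    have "(fst p1 \<union> fst p2, snd p1 \<union> snd p2) \<in> pprod P1 P2"
      unfolding pprod_def by (rule image_eqI[of _ _ "(p1,p2)"]) (simp_all add: p1(1) p2(1))
    moreover have "fst p1 \<union> fst p2 \<subseteq> G" "G \<subseteq> snd p1 \<union> snd p2" using p1 p2 GV by auto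
    ultimately show "\<exists>p\<in>pprod P1 P2. fst p \<subseteq> G \<and> G \<subseteq> snd p"
      by (intro bexI[of _ "(fst p1 \<union> fst p2, snd p1 \<union> snd p2)"]) auto
  qed
  show ?thesis using f w dj cv by (rule ipart_intro)
qed

lemma pprod_card:
  assumes "p \<in> pprod P1 P2" "\<forall>q\<in>P1. card (fst q) \<le> r1" "\<forall>q\<in>P2. card (fst q) \<le> r2"
    "\<forall>q\<in>P1. finite (fst q)" "\<forall>q\<in>P2. finite (fst q)"
  shows "card (fst p) \<le> r1 + r2"
proof -
  obtain p1 p2 where "p1 \<in> P1" "p2 \<in> P2" "p = (fst p1 \<union> fst p2, snd p1 \<union> snd p2)"
    using assms(1) unfolding pprod_def by auto
  then show ?thesis using assms card_Un_le[of "fst p1" "fst p2"] by fastforce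
qed

lemma ipart_empty: "ipart V {} {({}, V)}"
  by (rule ipart_intro) (auto simp: indep_def)

lemma ipart_one:
  assumes "a \<noteq> b"
  shows "ipart {a,b} {{a,b}} {({}, {a}), ({b},{b})}"
  apply (rule ipart_intro)
  using assms by (auto simp: indep_def)

lemma ipart_two:
  assumes ds: "distinct [a,b,c,d]"
  shows "ipart {a,b,c,d} {{a,b},{c,d}} {({}, {}), ({a},{a,c}), ({c},{c,b}), ({b},{b,d}), ({d},{d,a})}"
proof -
  let ?P = "{({}, {}), ({a},{a,c}), ({c},{c,b}), ({b},{b,d}), ({d},{d,a})} :: (nat set \<times> nat set) set"
  have w: "\<forall>p\<in>?P. fst p \<subseteq> snd p \<and> snd p \<subseteq> {a,b,c,d} \<and> indep {{a,b},{c,d}} (snd p)"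
    using ds unfolding indep_def by simp
  have dj0: "\<forall>p\<in>?P. \<forall>q\<in>?P. p \<noteq> q \<longrightarrow> \<not> fst p \<subseteq> snd q \<or> \<not> fst q \<subseteq> snd p"
    using ds by simp
  have dj: "\<forall>p\<in>?P. \<forall>q\<in>?P. p \<noteq> q \<longrightarrow> (\<forall>G. \<not> (fst p \<subseteq> G \<and> G \<subseteq> snd p \<and> fst q \<subseteq> G \<and> G \<subseteq> snd q))"
  proof (intro ballI impI allI notI)
    fix p q G assume "p \<in> ?P" "q \<in> ?P" "p \<noteq> q" "fst p \<subseteq> G \<and> G \<subseteq> snd p \<and> fst q \<subseteq> G \<and> G \<subseteq> snd q"
    moreover have "\<not> fst p \<subseteq> snd q \<or> \<not> fst q \<subseteq> snd p"
      using dj0 \<open>p \<in> ?P\<close> \<open>q \<in> ?P\<close> \<open>p \<noteq> q\<close> by (meson bspec)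
    ultimately show False by blast
  qed
  have cv: "\<forall>G. G \<subseteq> {a,b,c,d} \<longrightarrow> indep {{a,b},{c,d}} G \<longrightarrow> (\<exists>p\<in>?P. fst p \<subseteq> G \<and> G \<subseteq> snd p)"
  proof (intro allI impI)
    fix G assume G: "G \<subseteq> {a,b,c,d}" and iG: "indep {{a,b},{c,d}} G"
    have nab: "\<not> (a \<in> G \<and> b \<in> G)" and ncd: "\<not> (c \<in> G \<and> d \<in> G)" using iG unfolding indep_def by auto
    show "\<exists>p\<in>?P. fst p \<subseteq> G \<and> G \<subseteq> snd p"
    proof (cases "a \<in> G")
      case True
      then have nb: "b \<notin> G" using nab by blast
      show ?thesis
      proof (cases "d \<in> G")
        case True
        then have "G \<subseteq> {d,a}" using G nb ncd by auto
        then show ?thesis using \<open>d \<in> G\<close> by (intro bexI[of _ "({d},{d,a})"]) auto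
      next
        case False
        then have "G \<subseteq> {a,c}" using G nb by auto
        then show ?thesis using \<open>a \<in> G\<close> by (intro bexI[of _ "({a},{a,c})"]) auto
      qed
    next
      case na: False
      show ?thesis
      proof (cases "b \<in> G")
        case True
        show ?thesis
        proof (cases "c \<in> G")
          case True
          then have "G \<subseteq> {c,b}" using G na ncd by auto
          then show ?thesis using \<open>c \<in> G\<close> by (intro bexI[of _ "({c},{c,b})"]) auto
        next
          case False
          then have "G \<subseteq> {b,d}" using G na by auto
          then show ?thesis using \<open>b \<in> G\<close> by (intro bexI[of _ "({b},{b,d})"]) auto
        qed
      next
        case nb: False
        show ?thesis
        proof (cases "c \<in> G")
          case True
          then have "G \<subseteq> {c,b}" using G na nb ncd by auto
          then show ?thesis using \<open>c \<in> G\<close> by (intro bexI[of _ "({c},{c,b})"]) auto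
        next
          case False
          show ?thesis
          proof (cases "d \<in> G")
            case True
            then have "G \<subseteq> {d,a}" using G nb False by auto
            then show ?thesis using \<open>d \<in> G\<close> by (intro bexI[of _ "({d},{d,a})"]) auto
          next
            case nd: False
            then have "G = {}" using G na nb False by auto
            then show ?thesis by (intro bexI[of _ "({},{})"]) auto
          qed
        qed
      qed
    qed
  qed
  have f: "finite ?P" by simp
  show ?thesis using f w dj cv by (rule ipart_intro)
qed




lemma pprod_fin:
  assumes "p \<in> pprod P1 P2" "\<forall>q\<in>P1. finite (fst q)" "\<forall>q\<in>P2. finite (fst q)"
  shows "finite (fst p)"
  using assms unfolding pprod_def by force

lemma upper_aux:
  "\<And>E V. card E = k \<Longrightarrow> finite E \<Longrightarrow> (\<forall>e\<in>E. \<exists>x y. x \<noteq> y \<and> e = {x, y}) \<Longrightarrow>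
    (\<forall>e\<in>E. \<forall>f\<in>E. e \<noteq> f \<longrightarrow> e \<inter> f = {}) \<Longrightarrow> (\<forall>e\<in>E. e \<subseteq> V) \<Longrightarrow>
    \<exists>P. ipart V E P \<and> (\<forall>p\<in>P. finite (fst p) \<and> card (fst p) \<le> (card E + 1) div 2)"
proof (induction k rule: less_induct)
  case (less k E V)
  show ?case
  proof (cases "E = {}")
    case True
    then show ?thesis using ipart_empty[of V] by (intro exI[of _ "{({}, V)}"]) auto
  next
    case False
    then obtain e1 where e1E: "e1 \<in> E" by blast
    then obtain a b where ab: "a \<noteq> b" "e1 = {a,b}" using less.prems(3) by blast
    have abV: "{a,b} \<subseteq> V" using less.prems(5) e1E ab by blast
    show ?thesis
    proof (cases "E - {e1} = {}")
      case True
      then have Ee: "E = {{a,b}}" using e1E ab by blast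
      have h1: "ipart {a,b} {{a,b}} {({}, {a}), ({b},{b})}" using ipart_one[OF ab(1)] .
      have h2: "ipart (V - {a,b}) {} {({}, V - {a,b})}" by (rule ipart_empty)
      have "ipart ({a,b} \<union> (V - {a,b})) ({{a,b}} \<union> {}) (pprod {({}, {a}), ({b},{b})} {({}, V - {a,b})})"
        by (rule ipart_prod[OF h1 h2]) auto
      moreover have "{a,b} \<union> (V - {a,b}) = V" using abV by blast
      moreover have "\<forall>p\<in>pprod {({}, {a}), ({b},{b})} {({}, V - {a,b})}. finite (fst p) \<and> card (fst p) \<le> (card E + 1) div 2"
      proof
        fix p assume pp: "p \<in> pprod {({}, {a}), ({b},{b})} {({}, V - {a,b})}"
        have "card (fst p) \<le> 1 + 0" by (rule pprod_card[OF pp]) auto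
        moreover have "finite (fst p)" by (rule pprod_fin[OF pp]) auto
        ultimately show "finite (fst p) \<and> card (fst p) \<le> (card E + 1) div 2" using Ee by simp
      qed
      ultimately have "ipart V E (pprod {({}, {a}), ({b},{b})} {({}, V - {a,b})}) \<and> (\<forall>p\<in>pprod {({}, {a}), ({b},{b})} {({}, V - {a,b})}. finite (fst p) \<and> card (fst p) \<le> (card E + 1) div 2)"
        using Ee by (metis Un_empty_right)
      then show ?thesis by blast
    next
      case False
      then obtain e2 where e2E: "e2 \<in> E" "e2 \<noteq> e1" by blast
      then obtain c d where cd: "c \<noteq> d" "e2 = {c,d}" using less.prems(3) by blast
      have dsj: "e1 \<inter> e2 = {}" using less.prems(4) e1E e2E by blast
      have ds: "distinct [a,b,c,d]" using ab cd dsj by auto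
      have cdV: "{c,d} \<subseteq> V" using less.prems(5) e2E cd by blast
      define E' where "E' = E - {e1, e2}"
      have fE': "finite E'" using less.prems(2) unfolding E'_def by simp
      have cE: "card E = card E' + 2"
      proof -
        have "card E' = card E - card {e1,e2}" unfolding E'_def
          using less.prems(2) e1E e2E by (subst card_Diff_subset) auto
        moreover have "card {e1,e2} = 2" using e2E by simp
        moreover have "card {e1,e2} \<le> card E" using less.prems(2) e1E e2E by (intro card_mono) auto
        ultimately show ?thesis by simp
      qed
      have E'sub: "\<forall>e\<in>E'. e \<subseteq> V - {a,b,c,d}"
      proof
        fix e assume eE': "e \<in> E'"
        then have "e \<in> E" "e \<noteq> e1" "e \<noteq> e2" unfolding E'_def by auto
        then have "e \<inter> e1 = {}" "e \<inter> e2 = {}" "e \<subseteq> V" using less.prems(4,5) e1E e2E by auto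
        then show "e \<subseteq> V - {a,b,c,d}" using ab cd by auto
      qed
      obtain P' where P': "ipart (V - {a,b,c,d}) E' P'"
        "\<forall>p\<in>P'. finite (fst p) \<and> card (fst p) \<le> (card E' + 1) div 2"
      proof -
        have lt: "card E' < k" using cE less.prems(1) by simp
        have p3: "\<forall>e\<in>E'. \<exists>x y. x \<noteq> y \<and> e = {x, y}" using less.prems(3) unfolding E'_def by blast
        have p4: "\<forall>e\<in>E'. \<forall>f\<in>E'. e \<noteq> f \<longrightarrow> e \<inter> f = {}" using less.prems(4) unfolding E'_def by blast
        show ?thesis using less.IH[OF lt refl fE' p3 p4 E'sub] that by blast
      qed
      have "ipart ({a,b,c,d} \<union> (V - {a,b,c,d})) ({{a,b},{c,d}} \<union> E') (pprod {({}, {}), ({a},{a,c}), ({c},{c,b}), ({b},{b,d}), ({d},{d,a})} P')"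
        by (rule ipart_prod[OF ipart_two[OF ds] P'(1)]) (use E'sub in auto)
      moreover have "{a,b,c,d} \<union> (V - {a,b,c,d}) = V" using abV cdV by blast
      moreover have "{{a,b},{c,d}} \<union> E' = E" unfolding E'_def using ab cd e1E e2E by blast
      moreover have "\<forall>p\<in>pprod {({}, {}), ({a},{a,c}), ({c},{c,b}), ({b},{b,d}), ({d},{d,a})} P'. finite (fst p) \<and> card (fst p) \<le> (card E + 1) div 2"
      proof
        fix p assume pp: "p \<in> pprod {({}, {}), ({a},{a,c}), ({c},{c,b}), ({b},{b,d}), ({d},{d,a})} P'"
        have "card (fst p) \<le> 1 + (card E' + 1) div 2" by (rule pprod_card[OF pp]) (use P'(2) in auto)
        moreover have "finite (fst p)" by (rule pprod_fin[OF pp]) (use P'(2) in auto)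
        ultimately show "finite (fst p) \<and> card (fst p) \<le> (card E + 1) div 2" using cE by simp
      qed
      ultimately have "ipart V E (pprod {({}, {}), ({a},{a,c}), ({c},{c,b}), ({b},{b,d}), ({d},{d,a})} P') \<and> (\<forall>p\<in>pprod {({}, {}), ({a},{a,c}), ({c},{c,b}), ({b},{b,d}), ({d},{d,a})} P'. finite (fst p) \<and> card (fst p) \<le> (card E + 1) div 2)"
        by metis
      then show ?thesis by blast
    qed
  qed
qed



lemma lower_bound:
  assumes fE: "finite E"
    and ed: "\<forall>e\<in>E. \<exists>x y. x \<noteq> y \<and> e = {x, y}"
    and dsj: "\<forall>e\<in>E. \<forall>f\<in>E. e \<noteq> f \<longrightarrow> e \<inter> f = {}"
    and sub: "\<forall>e\<in>E. e \<subseteq> V"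
    and ip: "ipart V E P"
    and bd: "\<forall>p\<in>P. finite (fst p) \<and> card (fst p) \<le> r"
  shows "card E \<le> 2 * r"
proof -
  have "\<forall>e\<in>E. \<exists>xy. fst xy \<noteq> snd xy \<and> e = {fst xy, snd xy}"
  proof
    fix e assume "e \<in> E"
    then obtain x y where "x \<noteq> y" "e = {x,y}" using ed by blast
    then show "\<exists>xy. fst xy \<noteq> snd xy \<and> e = {fst xy, snd xy}" by (intro exI[of _ "(x,y)"]) simp
  qed
  from bchoice[OF this] obtain f where f: "\<forall>e\<in>E. fst (f e) \<noteq> snd (f e) \<and> e = {fst (f e), snd (f e)}"
    by (elim exE)
  define pv where "pv e = fst (f e)" for e
  define qv where "qv e = snd (f e)" for e
  have pq: "\<And>e. e \<in> E \<Longrightarrow> pv e \<noteq> qv e \<and> e = {pv e, qv e}" using f unfolding pv_def qv_def by blast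
  define vt where "vt e A = (if e \<in> A then pv e else qv e)" for e and A :: "nat set set"
  define T where "T A = (\<lambda>e. vt e A) ` E" for A
  have vte: "\<And>e A. e \<in> E \<Longrightarrow> vt e A \<in> e" using pq unfolding vt_def by auto
  have F1: "\<And>e e' A A'. e \<in> E \<Longrightarrow> e' \<in> E \<Longrightarrow> e \<noteq> e' \<Longrightarrow> vt e A \<noteq> vt e' A'"
  proof
    fix e e' A A' assume "e \<in> E" "e' \<in> E" "e \<noteq> e'" "vt e A = vt e' A'"
    then have "vt e A \<in> e \<inter> e'" using vte[of e A] vte[of e' A'] by simp
    then show False using dsj \<open>e \<in> E\<close> \<open>e' \<in> E\<close> \<open>e \<noteq> e'\<close> by blast
  qed
  have memT: "\<And>x e A. e \<in> E \<Longrightarrow> x \<in> e \<Longrightarrow> x \<in> T A \<Longrightarrow> x = vt e A"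
  proof -
    fix x e A assume eE: "e \<in> E" and xe: "x \<in> e" and xT: "x \<in> T A"
    then obtain e1 where e1: "e1 \<in> E" "x = vt e1 A" unfolding T_def by blast
    then have "e1 = e" using vte[OF e1(1), of A] xe dsj eE by blast
    then show "x = vt e A" using e1 by simp
  qed
  have TV: "\<And>A. T A \<subseteq> V" using vte sub unfolding T_def by blast
  have Tind: "\<And>A. indep E (T A)"
    unfolding indep_def
  proof (intro ballI notI)
    fix A e assume eE: "e \<in> E" and sT: "e \<subseteq> T A"
    have "pv e \<in> T A" "qv e \<in> T A" using sT pq[OF eE] by auto
    then have "pv e = vt e A" "qv e = vt e A" using memT eE pq[OF eE] by auto
    then show False using pq[OF eE] unfolding vt_def by (auto split: if_splits)
  qed
  define sel where "sel A = (SOME p. p \<in> P \<and> fst p \<subseteq> T A \<and> T A \<subseteq> snd p)" for A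
  have sel: "\<And>A. sel A \<in> P \<and> fst (sel A) \<subseteq> T A \<and> T A \<subseteq> snd (sel A)"
  proof -
    fix A
    have "\<exists>p\<in>P. fst p \<subseteq> T A \<and> T A \<subseteq> snd p" using ipart_cv[OF ip TV Tind] .
    then show "sel A \<in> P \<and> fst (sel A) \<subseteq> T A \<and> T A \<subseteq> snd (sel A)"
      unfolding sel_def by (rule someI2_bex) blast
  qed
  define g where "g e A = (if vt e A \<in> fst (sel A) then 1 else 0 :: nat)" for e A
  define flip where "flip e A = (if e \<in> A then A - {e} else insert e A)" for e and A :: "nat set set"
  have vtflip: "\<And>e' e A. e' \<noteq> e \<Longrightarrow> vt e' (flip e A) = vt e' A" unfolding vt_def flip_def by auto
  have key: "\<And>e A. e \<in> E \<Longrightarrow> 1 \<le> g e A + g e (flip e A)"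
  proof (rule ccontr)
    fix e A assume eE: "e \<in> E" and "\<not> 1 \<le> g e A + g e (flip e A)"
    then have n1: "vt e A \<notin> fst (sel A)" and n2: "vt e (flip e A) \<notin> fst (sel (flip e A))"
      unfolding g_def by (auto split: if_splits)
    define R where "R = (\<lambda>e'. vt e' A) ` (E - {e})"
    have RA: "R = T A - {vt e A}" unfolding R_def T_def using F1 eE by auto
    have R': "(\<lambda>e'. vt e' (flip e A)) ` (E - {e}) = R" unfolding R_def using vtflip by auto
    have RA': "R = T (flip e A) - {vt e (flip e A)}" unfolding R'[symmetric] T_def using F1 eE by auto
    have s1: "fst (sel A) \<subseteq> R" "R \<subseteq> snd (sel A)" using sel[of A] n1 RA by auto
    have s2: "fst (sel (flip e A)) \<subseteq> R" "R \<subseteq> snd (sel (flip e A))" using sel[of "flip e A"] n2 RA' by auto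
    have eq: "sel A = sel (flip e A)"
      using ipart_dj[OF ip _ _ s1 s2] sel by blast
    have "vt e A \<in> snd (sel A)" "vt e (flip e A) \<in> snd (sel A)"
      using sel[of A] sel[of "flip e A"] eq eE unfolding T_def by auto
    moreover have "{vt e A, vt e (flip e A)} = e" using pq[OF eE] unfolding vt_def flip_def by auto
    ultimately have "e \<subseteq> snd (sel A)" by (metis empty_subsetI insert_subset)
    moreover have "indep E (snd (sel A))" using ipart_w[OF ip] sel by blast
    ultimately show False using eE unfolding indep_def by blast
  qed
  define S where "S = Pow E"
  have fS: "finite S" using fE unfolding S_def by simp
  have cS: "card S > 0" using fS unfolding S_def by (auto simp add: card_gt_0_iff)
  have perA: "\<And>A. (\<Sum>e\<in>E. g e A) \<le> r"
  proof -
    fix A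
    have "(\<Sum>e\<in>E. g e A) = card {e\<in>E. vt e A \<in> fst (sel A)}"
      unfolding g_def using fE by (simp add: sum.If_cases Int_def conj_commute)
    also have "\<dots> = card ((\<lambda>e. vt e A) ` {e\<in>E. vt e A \<in> fst (sel A)})"
      by (rule card_image[symmetric]) (auto intro!: inj_onI dest: F1)
    also have "\<dots> \<le> card (fst (sel A))"
      using bd sel[of A] by (intro card_mono) auto
    also have "\<dots> \<le> r" using bd sel[of A] by blast
    finally show "(\<Sum>e\<in>E. g e A) \<le> r" .
  qed
  have perE: "\<And>e. e \<in> E \<Longrightarrow> card S \<le> 2 * (\<Sum>A\<in>S. g e A)"
  proof -
    fix e assume eE: "e \<in> E"
    have inv: "\<And>A. A \<in> S \<Longrightarrow> flip e (flip e A) = A" unfolding flip_def by auto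
    have inS: "\<And>A. A \<in> S \<Longrightarrow> flip e A \<in> S" unfolding flip_def S_def using eE by auto
    have "(\<Sum>A\<in>S. g e A) = (\<Sum>A\<in>S. g e (flip e A))"
      by (rule sum.reindex_bij_witness[of _ "flip e" "flip e"]) (use inv inS in auto)
    then have "2 * (\<Sum>A\<in>S. g e A) = (\<Sum>A\<in>S. g e A + g e (flip e A))"
      by (simp add: sum.distrib)
    moreover have "(\<Sum>A\<in>S. (1::nat)) \<le> (\<Sum>A\<in>S. g e A + g e (flip e A))"
      by (rule sum_mono) (rule key[OF eE])
    ultimately show "card S \<le> 2 * (\<Sum>A\<in>S. g e A)" by simp
  qed
  have "card E * card S = (\<Sum>e\<in>E. card S)" by simp
  also have "\<dots> \<le> (\<Sum>e\<in>E. 2 * (\<Sum>A\<in>S. g e A))" by (rule sum_mono) (rule perE)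
  also have "\<dots> = 2 * (\<Sum>A\<in>S. \<Sum>e\<in>E. g e A)" by (simp add: sum_distrib_left sum.swap[of _ E])
  also have "\<dots> \<le> 2 * (\<Sum>A\<in>S. r)" using perA sum_mono[of S "\<lambda>A. \<Sum>e\<in>E. g e A" "\<lambda>A. r"] by simp
  also have "\<dots> = (2 * r) * card S" by simp
  finally show ?thesis using cS by simp
qed



definition ind :: "nat set \<Rightarrow> nat \<Rightarrow> nat" where
  "ind G = (\<lambda>i. if i \<in> G then 1 else 0)"

lemma msupp_ind[simp]: "msupp (ind G) = G"
  unfolding msupp_def ind_def by auto

lemma sqf_ind: "squarefree_mono (ind G)"
  unfolding squarefree_mono_def ind_def by auto

lemma mono_set_iff: "a \<in> mono_set n \<longleftrightarrow> msupp a \<subseteq> {..<n}"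
proof
  assume h: "a \<in> mono_set n"
  show "msupp a \<subseteq> {..<n}"
  proof
    fix i assume "i \<in> msupp a"
    then have "a i \<noteq> 0" unfolding msupp_def by simp
    moreover have "\<forall>j. n \<le> j \<longrightarrow> a j = 0" using h unfolding mono_set_def by simp
    ultimately have "\<not> n \<le> i" by auto
    then show "i \<in> {..<n}" by simp
  qed
next
  assume h: "msupp a \<subseteq> {..<n}"
  show "a \<in> mono_set n" unfolding mono_set_def
  proof (intro CollectI allI impI)
    fix i assume "n \<le> i"
    then have "i \<notin> msupp a" using h by auto
    then show "a i = 0" unfolding msupp_def by simp
  qed
qed

lemma edge_ideal_iff:
  assumes "\<forall>e\<in>E. \<exists>x y. x \<noteq> y \<and> e = {x, y}"
  shows "in_edge_ideal E a \<longleftrightarrow> \<not> indep E (msupp a)"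
proof
  assume "in_edge_ideal E a"
  then obtain x y where "x \<noteq> y" "{x,y} \<in> E" "a x > 0" "a y > 0" unfolding in_edge_ideal_def by blast
  then have "{x,y} \<subseteq> msupp a" unfolding msupp_def by auto
  then show "\<not> indep E (msupp a)" using \<open>{x,y} \<in> E\<close> unfolding indep_def by blast
next
  assume "\<not> indep E (msupp a)"
  then obtain e where "e \<in> E" "e \<subseteq> msupp a" unfolding indep_def by blast
  obtain x y where xy: "x \<noteq> y" "e = {x,y}" using assms \<open>e \<in> E\<close> by blast
  have "{x,y} \<in> E" using xy \<open>e \<in> E\<close> by simp
  moreover have "a x > 0" "a y > 0" using xy \<open>e \<subseteq> msupp a\<close> unfolding msupp_def by auto
  ultimately show "in_edge_ideal E a" unfolding in_edge_ideal_def using xy(1) by (intro exI[of _ x] exI[of _ y]) simp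
qed

lemma space_D: "a \<in> stanley_space u Z \<Longrightarrow> msupp u \<subseteq> msupp a \<and> msupp a \<subseteq> msupp u \<union> Z"
  unfolding stanley_space_def msupp_def by auto

lemma space_I:
  assumes "squarefree_mono u" "msupp u \<subseteq> msupp a" "msupp a \<subseteq> Z"
  shows "a \<in> stanley_space u Z"
proof -
  define v where "v = (\<lambda>i. a i - u i)"
  have "msupp v \<subseteq> Z" using assms(3) unfolding v_def msupp_def by auto
  moreover have "a = (\<lambda>i. u i + v i)"
  proof
    fix i
    have "u i \<le> a i"
    proof (cases "u i = 0")
      case False
      moreover have "u i \<le> 1" using assms(1) unfolding squarefree_mono_def by blast
      ultimately have "u i = 1" by arith
      moreover have "a i \<noteq> 0" using False assms(2) unfolding msupp_def by auto
      ultimately show ?thesis by simp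
    qed simp
    then show "a i = u i + v i" unfolding v_def by simp
  qed
  ultimately show ?thesis unfolding stanley_space_def by (intro CollectI exI[of _ v] conjI)
qed

lemma mdeg_sqf:
  assumes "squarefree_mono u" "u \<in> mono_set n"
  shows "mdeg n u = card (msupp u)"
proof -
  have "mdeg n u = (\<Sum>i<n. if i \<in> msupp u then 1 else 0)"
    unfolding mdeg_def
  proof (rule sum.cong[OF refl])
    fix i show "u i = (if i \<in> msupp u then 1 else 0)"
    proof -
      have "u i \<le> 1" using assms(1) unfolding squarefree_mono_def by blast
      then show ?thesis unfolding msupp_def by auto
    qed
  qed
  also have "\<dots> = card ({..<n} \<inter> msupp u)" by (simp add: sum.If_cases)
  also have "{..<n} \<inter> msupp u = msupp u" using mono_set_iff[of u n] assms(2) by auto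
  finally show ?thesis .
qed


lemma indep_mono: "indep E G \<Longrightarrow> H \<subseteq> G \<Longrightarrow> indep E H"
  unfolding indep_def by blast

lemma lowerD:
  assumes ed: "\<forall>e\<in>E. \<exists>x y. x \<noteq> y \<and> e = {x, y}"
    and dsj: "\<forall>e\<in>E. \<forall>f\<in>E. e \<noteq> f \<longrightarrow> e \<inter> f = {}"
    and fE: "finite E" and sub: "\<forall>e\<in>E. e \<subseteq> {..<n}"
    and D: "sq_stanley_decomp n E D"
  shows "card E \<le> 2 * stanley_reg_of n D"
proof -
  define sp where "sp k = stanley_space (fst (D!k)) (snd (D!k))" for k
  have D1: "\<And>k. k < length D \<Longrightarrow> fst (D!k) \<in> mono_set n \<and> snd (D!k) \<subseteq> {..<n}
        \<and> squarefree_mono (fst (D!k)) \<and> msupp (fst (D!k)) \<subseteq> snd (D!k)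
        \<and> sp k \<inter> {a. in_edge_ideal E a} = {}"
    using D unfolding sq_stanley_decomp_def sp_def by blast
  have D2: "\<And>k l. k < length D \<Longrightarrow> l < length D \<Longrightarrow> k \<noteq> l \<Longrightarrow> sp k \<inter> sp l = {}"
    using D unfolding sq_stanley_decomp_def sp_def by blast
  have D3: "(\<Union>k<length D. sp k) = standard_monos n E"
    using D unfolding sq_stanley_decomp_def sp_def by blast
  define P where "P = (\<lambda>p. (msupp (fst p), snd p)) ` set D"
  have Pk: "\<And>p. p \<in> P \<Longrightarrow> \<exists>k<length D. p = (msupp (fst (D!k)), snd (D!k))"
  proof -
    fix p assume "p \<in> P"
    then obtain d where d: "d \<in> set D" "p = (msupp (fst d), snd d)" unfolding P_def by blast
    then obtain k where "k < length D" "D!k = d" by (auto simp: in_set_conv_nth)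
    then show "\<exists>k<length D. p = (msupp (fst (D!k)), snd (D!k))" using d(2) by blast
  qed
  have indZ: "\<And>k. k < length D \<Longrightarrow> ind (snd (D!k)) \<in> sp k"
    unfolding sp_def using D1 by (intro space_I) auto
  have w: "\<forall>p\<in>P. fst p \<subseteq> snd p \<and> snd p \<subseteq> {..<n} \<and> indep E (snd p)"
  proof
    fix p assume "p \<in> P"
    then obtain k where k: "k < length D" "p = (msupp (fst (D!k)), snd (D!k))" using Pk by blast
    have "\<not> in_edge_ideal E (ind (snd (D!k)))" using indZ[OF k(1)] D1[OF k(1)] by blast
    then have "indep E (snd (D!k))" using edge_ideal_iff[OF ed] by simp
    then show "fst p \<subseteq> snd p \<and> snd p \<subseteq> {..<n} \<and> indep E (snd p)" using D1[OF k(1)] k(2) by simp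
  qed
  have dj: "\<forall>p\<in>P. \<forall>q\<in>P. p \<noteq> q \<longrightarrow> (\<forall>G. \<not> (fst p \<subseteq> G \<and> G \<subseteq> snd p \<and> fst q \<subseteq> G \<and> G \<subseteq> snd q))"
  proof (intro ballI impI allI notI)
    fix p q G assume pP: "p \<in> P" and qP: "q \<in> P" and ne: "p \<noteq> q"
      and G: "fst p \<subseteq> G \<and> G \<subseteq> snd p \<and> fst q \<subseteq> G \<and> G \<subseteq> snd q"
    obtain k where k: "k < length D" "p = (msupp (fst (D!k)), snd (D!k))" using Pk pP by blast
    obtain l where l: "l < length D" "q = (msupp (fst (D!l)), snd (D!l))" using Pk qP by blast
    have "ind G \<in> sp k" unfolding sp_def using D1[OF k(1)] G k(2) by (intro space_I) auto
    moreover have "ind G \<in> sp l" unfolding sp_def using D1[OF l(1)] G l(2) by (intro space_I) auto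
    ultimately have "k = l" using D2 k(1) l(1) by blast
    then show False using ne k l by simp
  qed
  have cv: "\<forall>G. G \<subseteq> {..<n} \<longrightarrow> indep E G \<longrightarrow> (\<exists>p\<in>P. fst p \<subseteq> G \<and> G \<subseteq> snd p)"
  proof (intro allI impI)
    fix G assume GV: "G \<subseteq> {..<n}" and iG: "indep E G"
    have "ind G \<in> standard_monos n E" unfolding standard_monos_def
      using GV iG mono_set_iff[of "ind G" n] edge_ideal_iff[OF ed, of "ind G"] by simp
    then obtain k where k: "k < length D" "ind G \<in> sp k" using D3 by blast
    have "msupp (fst (D!k)) \<subseteq> G \<and> G \<subseteq> snd (D!k)"
      using space_D[OF k(2)[unfolded sp_def]] D1[OF k(1)] by auto
    moreover have "(msupp (fst (D!k)), snd (D!k)) \<in> P" unfolding P_def using k(1) by auto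
    ultimately show "\<exists>p\<in>P. fst p \<subseteq> G \<and> G \<subseteq> snd p" by (intro bexI[of _ "(msupp (fst (D!k)), snd (D!k))"]) auto
  qed
  have ip: "ipart {..<n} E P"
    by (rule ipart_intro) (use w dj cv in \<open>auto simp: P_def\<close>)
  have bd: "\<forall>p\<in>P. finite (fst p) \<and> card (fst p) \<le> stanley_reg_of n D"
  proof
    fix p assume "p \<in> P"
    then obtain k where k: "k < length D" "p = (msupp (fst (D!k)), snd (D!k))" using Pk by blast
    have mk: "fst (D!k) \<in> mono_set n" "squarefree_mono (fst (D!k))" using D1[OF k(1)] by auto
    have fin: "finite (msupp (fst (D!k)))" using mk(1) mono_set_iff finite_subset by blast
    have "mdeg n (fst (D!k)) \<in> insert 0 (set (map (\<lambda>p. mdeg n (fst p)) D))" using k(1) by auto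
    then have "mdeg n (fst (D!k)) \<le> stanley_reg_of n D" unfolding stanley_reg_of_def by (intro Max_ge) auto
    then show "finite (fst p) \<and> card (fst p) \<le> stanley_reg_of n D"
      using mdeg_sqf[OF mk(2) mk(1)] fin k(2) by simp
  qed
  show ?thesis using lower_bound[OF fE ed dsj sub ip bd] .
qed


lemma upperD:
  assumes ed: "\<forall>e\<in>E. \<exists>x y. x \<noteq> y \<and> e = {x, y}"
    and dsj: "\<forall>e\<in>E. \<forall>f\<in>E. e \<noteq> f \<longrightarrow> e \<inter> f = {}"
    and fE: "finite E" and sub: "\<forall>e\<in>E. e \<subseteq> {..<n}"
  shows "\<exists>D. sq_stanley_decomp n E D \<and> stanley_reg_of n D \<le> (card E + 1) div 2"
proof -
  obtain P where ip: "ipart {..<n} E P"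
    and bd: "\<forall>p\<in>P. finite (fst p) \<and> card (fst p) \<le> (card E + 1) div 2"
    using upper_aux[OF refl fE ed dsj sub] by blast
  obtain xs where xs: "set xs = P" "distinct xs" using finite_distinct_list[OF ipart_fin[OF ip]] by blast
  define D where "D = map (\<lambda>p. (ind (fst p), snd p)) xs"
  have lD: "length D = length xs" unfolding D_def by simp
  have Dk: "\<And>k. k < length D \<Longrightarrow> D!k = (ind (fst (xs!k)), snd (xs!k))" unfolding D_def by simp
  have xP: "\<And>k. k < length D \<Longrightarrow> xs!k \<in> P" using xs(1) lD by auto
  have wk: "\<And>k. k < length D \<Longrightarrow> fst (xs!k) \<subseteq> snd (xs!k) \<and> snd (xs!k) \<subseteq> {..<n} \<and> indep E (snd (xs!k))"
    using ipart_w[OF ip xP] by blast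
  have spD: "\<And>k a. k < length D \<Longrightarrow> a \<in> stanley_space (fst (D!k)) (snd (D!k)) \<Longrightarrow>
      fst (xs!k) \<subseteq> msupp a \<and> msupp a \<subseteq> snd (xs!k)"
    using space_D Dk wk by fastforce
  have C1: "\<forall>k<length D. fst (D!k) \<in> mono_set n \<and> snd (D!k) \<subseteq> {..<n}
        \<and> squarefree_mono (fst (D!k)) \<and> msupp (fst (D!k)) \<subseteq> snd (D!k)
        \<and> stanley_space (fst (D!k)) (snd (D!k)) \<inter> {a. in_edge_ideal E a} = {}"
  proof (intro allI impI conjI)
    fix k assume k: "k < length D"
    show "fst (D!k) \<in> mono_set n" using Dk[OF k] wk[OF k] mono_set_iff by auto
    show "snd (D!k) \<subseteq> {..<n}" using Dk[OF k] wk[OF k] by auto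
    show "squarefree_mono (fst (D!k))" using Dk[OF k] sqf_ind by simp
    show "msupp (fst (D!k)) \<subseteq> snd (D!k)" using Dk[OF k] wk[OF k] by auto
    show "stanley_space (fst (D!k)) (snd (D!k)) \<inter> {a. in_edge_ideal E a} = {}"
    proof (rule ccontr)
      assume "stanley_space (fst (D!k)) (snd (D!k)) \<inter> {a. in_edge_ideal E a} \<noteq> {}"
      then obtain a where a: "a \<in> stanley_space (fst (D!k)) (snd (D!k))" "in_edge_ideal E a" by blast
      have "indep E (msupp a)" using spD[OF k a(1)] wk[OF k] indep_mono by blast
      then show False using a(2) edge_ideal_iff[OF ed] by blast
    qed
  qed
  have C2: "\<forall>k<length D. \<forall>l<length D. k \<noteq> l \<longrightarrow>
        stanley_space (fst (D!k)) (snd (D!k)) \<inter> stanley_space (fst (D!l)) (snd (D!l)) = {}"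
  proof (intro allI impI)
    fix k l assume k: "k < length D" and l: "l < length D" and ne: "k \<noteq> l"
    show "stanley_space (fst (D!k)) (snd (D!k)) \<inter> stanley_space (fst (D!l)) (snd (D!l)) = {}"
    proof (rule ccontr)
      assume "stanley_space (fst (D!k)) (snd (D!k)) \<inter> stanley_space (fst (D!l)) (snd (D!l)) \<noteq> {}"
      then obtain a where a: "a \<in> stanley_space (fst (D!k)) (snd (D!k))" "a \<in> stanley_space (fst (D!l)) (snd (D!l))" by blast
      have "xs!k = xs!l" using ipart_dj[OF ip xP[OF k] xP[OF l]] spD[OF k a(1)] spD[OF l a(2)] by blast
      then show False using ne k l lD xs(2) nth_eq_iff_index_eq by metis
    qed
  qed
  have C3: "(\<Union>k<length D. stanley_space (fst (D!k)) (snd (D!k))) = standard_monos n E"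
  proof
    show "(\<Union>k<length D. stanley_space (fst (D!k)) (snd (D!k))) \<subseteq> standard_monos n E"
    proof
      fix a assume "a \<in> (\<Union>k<length D. stanley_space (fst (D!k)) (snd (D!k)))"
      then obtain k where k: "k < length D" and a: "a \<in> stanley_space (fst (D!k)) (snd (D!k))" by blast
      have "indep E (msupp a)" using spD[OF k a] wk[OF k] indep_mono by blast
      moreover have "msupp a \<subseteq> {..<n}" using spD[OF k a] wk[OF k] by blast
      ultimately show "a \<in> standard_monos n E" unfolding standard_monos_def
        using mono_set_iff[of a n] edge_ideal_iff[OF ed, of a] by simp
    qed
  next
    show "standard_monos n E \<subseteq> (\<Union>k<length D. stanley_space (fst (D!k)) (snd (D!k)))"
    proof
      fix a assume "a \<in> standard_monos n E"
      then have aV: "msupp a \<subseteq> {..<n}" and ia: "indep E (msupp a)"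
        unfolding standard_monos_def using mono_set_iff[of a n] edge_ideal_iff[OF ed, of a] by auto
      obtain p where p: "p \<in> P" "fst p \<subseteq> msupp a" "msupp a \<subseteq> snd p" using ipart_cv[OF ip aV ia] by blast
      then obtain k where k: "k < length xs" "xs!k = p" using xs(1) by (auto simp: in_set_conv_nth)
      have kD: "k < length D" using k lD by simp
      have "a \<in> stanley_space (fst (D!k)) (snd (D!k))"
        using Dk[OF kD] k(2) p sqf_ind by (auto intro!: space_I)
      then show "a \<in> (\<Union>k<length D. stanley_space (fst (D!k)) (snd (D!k)))" using kD by blast
    qed
  qed
  have dec: "sq_stanley_decomp n E D" unfolding sq_stanley_decomp_def using C1 C2 C3 by blast
  have reg: "stanley_reg_of n D \<le> (card E + 1) div 2"
    unfolding stanley_reg_of_def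
  proof (subst Max_le_iff)
    show "finite (insert 0 (set (map (\<lambda>p. mdeg n (fst p)) D)))" by simp
    show "insert 0 (set (map (\<lambda>p. mdeg n (fst p)) D)) \<noteq> {}" by simp
    show "\<forall>x\<in>insert 0 (set (map (\<lambda>p. mdeg n (fst p)) D)). x \<le> (card E + 1) div 2"
    proof
      fix x assume "x \<in> insert 0 (set (map (\<lambda>p. mdeg n (fst p)) D))"
      then consider "x = 0" | k where "k < length D" "x = mdeg n (fst (D!k))" by (auto simp: in_set_conv_nth)
      then show "x \<le> (card E + 1) div 2"
      proof cases
        case 1 then show ?thesis by simp
      next
        case (2 k)
        have "fst (D!k) \<in> mono_set n" using C1 2(1) by blast
        then have "x = card (fst (xs!k))" using 2 Dk[OF 2(1)] mdeg_sqf[OF sqf_ind] by simp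
        then show ?thesis using bd xP[OF 2(1)] by simp
      qed
    qed
  qed
  show ?thesis using dec reg by blast
qed

theorem corollary5p3:
  fixes n m :: nat and E :: "nat set set"
  assumes "m \<ge> 1"
    and "\<forall>e\<in>E. \<exists>x y. x \<noteq> y \<and> x < n \<and> y < n \<and> e = {x, y}"
    and "\<forall>e\<in>E. \<forall>f\<in>E. e \<noteq> f \<longrightarrow> e \<inter> f = {}"
    and "finite E" and "card E = m"
  shows "sreg n E = (m + 1) div 2"
proof -
  have ed: "\<forall>e\<in>E. \<exists>x y. x \<noteq> y \<and> e = {x, y}" using assms(2) by blast
  have sub: "\<forall>e\<in>E. e \<subseteq> {..<n}" using assms(2) by fastforce
  obtain D where D: "sq_stanley_decomp n E D" "stanley_reg_of n D \<le> (m + 1) div 2"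
    using upperD[OF ed assms(3) assms(4) sub] assms(5) by blast
  have "m \<le> 2 * stanley_reg_of n D" using lowerD[OF ed assms(3) assms(4) sub D(1)] assms(5) by simp
  then have eqD: "stanley_reg_of n D = (m + 1) div 2" using D(2) by linarith
  show ?thesis unfolding sreg_def
  proof (rule Least_equality)
    show "\<exists>D. sq_stanley_decomp n E D \<and> stanley_reg_of n D = (m + 1) div 2" using D(1) eqD by blast
  next
    fix y assume "\<exists>D. sq_stanley_decomp n E D \<and> stanley_reg_of n D = y"
    then obtain D' where D': "sq_stanley_decomp n E D'" "stanley_reg_of n D' = y" by blast
    have "m \<le> 2 * y" using lowerD[OF ed assms(3) assms(4) sub D'(1)] assms(5) D'(2) by simp
    then show "(m + 1) div 2 \<le> y" by linarith
  qed
qed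

end
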